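(* Let $r>0$, let $n\ge \nu\ge 2$, and let $\hat\alpha\ne0$, $\hat\beta$, $\hat\gamma$ be real numbers. Let $X^{(0)}=(x^{(0)}(1),\dots,x^{(0)}(n))$ be a real sequence whose $r$-th accumulated sequence $X^{(r)}=X^{(0)}A^r$ satisfies $$x^{(r)}(k)=\left[x^{(0)}(1)-\frac{\hat\beta}{\hat\alpha}+\frac{\hat\beta}{\hat\alpha^2}-\frac{\hat\gamma}{\hat\alpha}\right]e^{-\hat\alpha(k-1)}+\frac{\hat\beta}{\hat\alpha}k-\frac{\hat\beta}{\hat\alpha^2}+\frac{\hat\gamma}{\hat\alpha},\quad k=2,\dots,n.$$ Let $(a,b,c)$ be the least-squares estimate $(a,b,c)^{\mathcal T}=(B^{\mathcal T}B)^{-1}B^{\mathcal T}Y$ computed from this sequence, and let $(\alpha,\beta,\gamma)$ be the FAGMO(1,1,$k$) parameters $$\alpha=\ln\frac{2+a}{2-a},\qquad \beta=\frac{b}{a}\ln\frac{2+a}{2-a},\qquad \gamma=\frac{\alpha c}{a}-\frac{\alpha b}{2a}+\frac{\beta}{\alpha}+\frac{\beta}{2}-\frac{\beta}{a}$$ (assuming all these quantities are well defined). Then $\alpha=\hat\alpha$, $\beta=\hat\beta$, $\gamma=\hat\gamma$, and the FAGMO(1,1,$k$) predicted values $\hat x^{(0)}(k)$, $k=1,\dots,n$, coincide with the given data $x^{(0)}(k)$.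
   Context: Notation: $A^r$ is the $n\times n$ upper triangular Toeplitz matrix with $(j,l)$ entry $\left[{}_{l-j}^{r}\right]$ for $l\ge j$, where $\left[{}_0^r\right]=1$ and $\left[{}_i^r\right]=\frac{r(r+1)\cdots(r+i-1)}{i!}$; $D^r=(A^r)^{-1}$ is the upper triangular Toeplitz matrix with entries $\left[{}_{l-j}^{-r}\right]$, $\left[{}_0^{-r}\right]=1$, $\left[{}_i^{-r}\right]=\frac{(-r)(-r+1)\cdots(-r+i-1)}{i!}$. Least squares: with $z^{(r)}(k)=\tfrac12(x^{(r)}(k-1)+x^{(r)}(k))$ and $x^{(r-1)}(k):=x^{(r)}(k)-x^{(r)}(k-1)$, $B$ is the $(\nu-1)\times 3$ matrix with rows $\big(-z^{(r)}(k),\ \tfrac{2k-1}{2},\ 1\big)$ and $Y$ the column vector with entries $x^{(r-1)}(k)$, $k=2,\dots,\nu$ ($\nu$ = number of samples used to build the model). FAGMO(1,1,$k$) prediction: $\hat x^{(r)}(1)=x^{(0)}(1)$ and for $k\ge2$, $\hat x^{(r)}(k)=\left[x^{(0)}(1)-\frac{\beta}{\alpha}+\frac{\beta}{\alpha^2}-\frac{\gamma}{\alpha}\right]e^{-\alpha(k-1)}+\frac{\beta}{\alpha}k-\frac{\beta}{\alpha^2}+\frac{\gamma}{\alpha}$; the predicted values are $(\hat x^{(0)}(1),\dots,\hat x^{(0)}(n))=(\hat x^{(r)}(1),\dots,\hat x^{(r)}(n))D^r$. *)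

theory Defs
  imports "HOL-Analysis.Analysis"
begin

text \<open>Sequences are functions nat \<Rightarrow> real, used on the index range 1..n.\<close>

definition gbin :: "real \<Rightarrow> nat \<Rightarrow> real" where
  "gbin r i = pochhammer r i / fact i"

definition Amat :: "real \<Rightarrow> nat \<Rightarrow> nat \<Rightarrow> real" where
  "Amat r j l = (if j \<le> l then gbin r (l - j) else 0)"

definition Dmat :: "real \<Rightarrow> nat \<Rightarrow> nat \<Rightarrow> real" where
  "Dmat r j l = (if j \<le> l then gbin (-r) (l - j) else 0)"

definition rowmul :: "nat \<Rightarrow> (nat \<Rightarrow> real) \<Rightarrow> (nat \<Rightarrow> nat \<Rightarrow> real) \<Rightarrow> nat \<Rightarrow> real" where
  "rowmul n x M l = (\<Sum>j = 1..n. x j * M j l)"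

definition accum :: "real \<Rightarrow> nat \<Rightarrow> (nat \<Rightarrow> real) \<Rightarrow> nat \<Rightarrow> real" where
  "accum r n x = rowmul n x (Amat r)"

definition zr :: "real \<Rightarrow> nat \<Rightarrow> (nat \<Rightarrow> real) \<Rightarrow> nat \<Rightarrow> real" where
  "zr r n x k = (accum r n x (k - 1) + accum r n x k) / 2"

definition dr :: "real \<Rightarrow> nat \<Rightarrow> (nat \<Rightarrow> real) \<Rightarrow> nat \<Rightarrow> real" where
  "dr r n x k = accum r n x k - accum r n x (k - 1)"

definition Brow :: "real \<Rightarrow> nat \<Rightarrow> (nat \<Rightarrow> real) \<Rightarrow> nat \<Rightarrow> real^3" where
  "Brow r n x k = vector [- zr r n x k, (2 * real k - 1) / 2, 1]"

definition BtB :: "real \<Rightarrow> nat \<Rightarrow> (nat \<Rightarrow> real) \<Rightarrow> nat \<Rightarrow> real^3^3" where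
  "BtB r n x \<nu> = (\<chi> i j. \<Sum>k = 2..\<nu>. Brow r n x k $ i * Brow r n x k $ j)"

definition BtY :: "real \<Rightarrow> nat \<Rightarrow> (nat \<Rightarrow> real) \<Rightarrow> nat \<Rightarrow> real^3" where
  "BtY r n x \<nu> = (\<chi> i. \<Sum>k = 2..\<nu>. Brow r n x k $ i * dr r n x k)"

definition lsq :: "real \<Rightarrow> nat \<Rightarrow> (nat \<Rightarrow> real) \<Rightarrow> nat \<Rightarrow> real^3" where
  "lsq r n x \<nu> = matrix_inv (BtB r n x \<nu>) *v BtY r n x \<nu>"

definition fag_alpha :: "real \<Rightarrow> real" where
  "fag_alpha a = ln ((2 + a) / (2 - a))"

definition fag_beta :: "real \<Rightarrow> real \<Rightarrow> real" where
  "fag_beta a b = b / a * ln ((2 + a) / (2 - a))"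

definition fag_gamma :: "real \<Rightarrow> real \<Rightarrow> real \<Rightarrow> real" where
  "fag_gamma a b c =
     (let \<alpha> = fag_alpha a; \<beta> = fag_beta a b
      in \<alpha> * c / a - \<alpha> * b / (2 * a) + \<beta> / \<alpha> + \<beta> / 2 - \<beta> / a)"

definition resp :: "real \<Rightarrow> real \<Rightarrow> real \<Rightarrow> real \<Rightarrow> nat \<Rightarrow> real" where
  "resp x1 \<alpha> \<beta> \<gamma> k =
     (x1 - \<beta> / \<alpha> + \<beta> / \<alpha>^2 - \<gamma> / \<alpha>) * exp (- \<alpha> * (real k - 1))
     + \<beta> / \<alpha> * real k - \<beta> / \<alpha>^2 + \<gamma> / \<alpha>"

definition pred_r :: "real \<Rightarrow> real \<Rightarrow> real \<Rightarrow> real \<Rightarrow> nat \<Rightarrow> real" where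
  "pred_r x1 \<alpha> \<beta> \<gamma> k = (if k = 1 then x1 else resp x1 \<alpha> \<beta> \<gamma> k)"

definition pred0 :: "real \<Rightarrow> nat \<Rightarrow> nat \<Rightarrow> (nat \<Rightarrow> real) \<Rightarrow> nat \<Rightarrow> real" where
  "pred0 r n \<nu> x =
     (let v = lsq r n x \<nu>; a = v $ 1; b = v $ 2; c = v $ 3
      in rowmul n (pred_r (x 1) (fag_alpha a) (fag_beta a b) (fag_gamma a b c)) (Dmat r))"

end

theory Submission imports Defs "HOL-Computational_Algebra.Formal_Power_Series" begin

lemma gbin_gchoose: "gbin r m = (-1)^m * ((-r) gchoose m)"
  by (simp add: gbin_def gbinomial_pochhammer)

lemma gbin_conv: "(\<Sum>m=0..N. gbin r m * gbin (-r) (N-m)) = (if N = 0 then 1 else 0)"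
proof -
  have "(\<Sum>m=0..N. gbin r m * gbin (-r) (N-m)) = (\<Sum>m=0..N. (-1)^N * (((-r) gchoose m) * (r gchoose (N-m))))"
  proof (rule sum.cong)
    fix m assume "m \<in> {0..N}"
    hence "(-1::real)^m * (-1)^(N-m) = (-1)^N" by (simp add: power_add[symmetric])
    thus "gbin r m * gbin (-r) (N-m) = (-1)^N * (((-r) gchoose m) * (r gchoose (N-m)))"
      by (simp add: gbin_gchoose)
  qed simp
  also have "\<dots> = (-1)^N * ((-r + r) gchoose N)"
    by (simp add: sum_distrib_left[symmetric] gbinomial_Vandermonde)
  finally show ?thesis by (simp add: gbinomial_0_left)
qed

lemma AD: assumes "1 \<le> i" "i \<le> n" "1 \<le> k" "k \<le> n"
  shows "(\<Sum>j=1..n. Amat r i j * Dmat r j k) = (if i = k then 1 else 0)"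
proof (cases "i \<le> k")
  case False
  thus ?thesis by (intro trans[OF sum.neutral]) (auto simp: Amat_def Dmat_def)
next
  case True
  have "(\<Sum>j=1..n. Amat r i j * Dmat r j k) = (\<Sum>j=i..k. Amat r i j * Dmat r j k)"
    using assms True by (intro sum.mono_neutral_right) (auto simp: Amat_def Dmat_def)
  also have "\<dots> = (\<Sum>j=i..k. gbin r (j-i) * gbin (-r) (k-j))"
    by (intro sum.cong) (auto simp: Amat_def Dmat_def)
  also have "\<dots> = (\<Sum>m=0..k-i. gbin r m * gbin (-r) ((k-i)-m))"
  proof -
    have "(\<Sum>m=0..k-i. gbin r m * gbin (-r) ((k-i)-m)) = (\<Sum>j\<in>(\<lambda>m. m+i) ` {0..k-i}. gbin r (j-i) * gbin (-r) (k-j))"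
      by (subst sum.reindex) (auto simp: inj_on_def add.commute intro!: sum.cong)
    also have "(\<lambda>m. m+i) ` {0..k-i} = {i..k}" using True
      by (auto simp: image_iff intro!: exI[of _ "_ - i"])
    finally show ?thesis by simp
  qed
  also have "\<dots> = (if i = k then 1 else 0)" using True by (subst gbin_conv) auto
  finally show ?thesis .
qed

lemma inv_rowmul: assumes "1 \<le> k" "k \<le> n"
  shows "rowmul n (accum r n x) (Dmat r) k = x k"
proof -
  have "rowmul n (accum r n x) (Dmat r) k = (\<Sum>j=1..n. \<Sum>i=1..n. x i * Amat r i j * Dmat r j k)"
    by (simp add: rowmul_def accum_def sum_distrib_right)
  also have "\<dots> = (\<Sum>i=1..n. x i * (\<Sum>j=1..n. Amat r i j * Dmat r j k))"
    by (subst sum.swap) (simp add: sum_distrib_left mult.assoc)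
  also have "\<dots> = (\<Sum>i=1..n. x i * (if i = k then 1 else 0))"
    using assms by (intro sum.cong refl) (subst AD, auto)
  also have "\<dots> = x k" using assms by (simp add: if_distrib cong: if_cong)
  finally show ?thesis .
qed

lemma accum1: assumes "1 \<le> n" shows "accum r n x 1 = x 1"
proof -
  have "accum r n x 1 = (\<Sum>j\<in>{1}. x j * Amat r j 1)"
    unfolding accum_def rowmul_def using assms
    by (intro sum.mono_neutral_right) (auto simp: Amat_def)
  thus ?thesis by (simp add: Amat_def gbin_def)
qed

lemma key: "(a::real)*(E+1) = 2*(E-1) \<Longrightarrow> - ((E*w + p * (k - 1) + q + (w + p * k + q)) / 2) * a +
    (2 * k - 1) / 2 * (a * p) + (p + a * q) = w + p * k + q - (E*w + p * (k - 1) + q)"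
  by algebra

lemma lsq_exact:
  assumes inv: "invertible (BtB r n x \<nu>)"
    and ex: "\<forall>k\<in>{2..\<nu>}. - zr r n x k * a0 + (2 * real k - 1) / 2 * b0 + c0 = dr r n x k"
  shows "lsq r n x \<nu> = vector [a0, b0, c0]"
proof -
  let ?v = "vector [a0, b0, c0] :: real^3"
  have row: "Brow r n x k \<bullet> ?v = dr r n x k" if "k \<in> {2..\<nu>}" for k
    using ex that by (simp add: Brow_def inner_vec_def sum_3 vector_3)
  have "BtB r n x \<nu> *v ?v = BtY r n x \<nu>"
  proof -
    have "BtB r n x \<nu> *v ?v = (\<chi> i. \<Sum>k=2..\<nu>. Brow r n x k $ i * (Brow r n x k \<bullet> ?v))"
      by (simp add: BtB_def matrix_vector_mult_def inner_vec_def sum_distrib_right sum_distrib_left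
          mult.assoc vec_eq_iff) (subst sum.swap, simp)
    also have "\<dots> = BtY r n x \<nu>" by (simp add: BtY_def row vec_eq_iff)
    finally show ?thesis .
  qed
  moreover have "matrix_inv (BtB r n x \<nu>) ** BtB r n x \<nu> = mat 1"
    using inv unfolding invertible_def matrix_inv_def by (rule someI2_ex) auto
  ultimately show ?thesis unfolding lsq_def
    by (metis matrix_vector_mul_assoc matrix_vector_mul_lid)
qed

theorem theorem4:
  fixes r \<alpha>h \<beta>h \<gamma>h :: real and n \<nu> :: nat and x :: "nat \<Rightarrow> real"
  assumes "r > 0" and "2 \<le> \<nu>" and "\<nu> \<le> n" and "\<alpha>h \<noteq> 0"
    and model: "\<forall>k \<in> {2..n}. accum r n x k = resp (x 1) \<alpha>h \<beta>h \<gamma>h k"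
    and inv: "invertible (BtB r n x \<nu>)"
    and a_nz: "lsq r n x \<nu> $ 1 \<noteq> 0"
    and ln_def: "(2 + lsq r n x \<nu> $ 1) / (2 - lsq r n x \<nu> $ 1) > 0"
  shows "fag_alpha (lsq r n x \<nu> $ 1) = \<alpha>h
       \<and> fag_beta (lsq r n x \<nu> $ 1) (lsq r n x \<nu> $ 2) = \<beta>h
       \<and> fag_gamma (lsq r n x \<nu> $ 1) (lsq r n x \<nu> $ 2) (lsq r n x \<nu> $ 3) = \<gamma>h
       \<and> (\<forall>k \<in> {1..n}. pred0 r n \<nu> x k = x k)"
proof -
  define E where "E = exp \<alpha>h"
  define C where "C = x 1 - \<beta>h / \<alpha>h + \<beta>h / \<alpha>h^2 - \<gamma>h / \<alpha>h"
  define p where "p = \<beta>h / \<alpha>h"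
  define q where "q = - \<beta>h / \<alpha>h^2 + \<gamma>h / \<alpha>h"
  define a0 where "a0 = 2 * (E - 1) / (E + 1)"
  define b0 where "b0 = a0 * p"
  define c0 where "c0 = p + a0 * q"
  have Epos: "E > 0" by (simp add: E_def)
  have E1: "E \<noteq> 1" using assms(4) by (simp add: E_def)
  have acc: "accum r n x k = C * exp (- \<alpha>h * (real k - 1)) + p * real k + q"
    if "k \<in> {1..n}" for k
  proof (cases "k = 1")
    case True
    thus ?thesis using accum1[of n r x] that by (simp add: C_def p_def q_def)
  next
    case False
    thus ?thesis using model that by (simp add: resp_def C_def p_def q_def)
  qed
  have ex: "\<forall>k\<in>{2..\<nu>}. - zr r n x k * a0 + (2 * real k - 1) / 2 * b0 + c0 = dr r n x k"
  proof
    fix k assume k: "k \<in> {2..\<nu>}"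
    define u where "u = exp (- \<alpha>h * (real k - 2))"
    have k1: "accum r n x (k-1) = C * u + p * (real k - 1) + q"
    proof -
      have "k - 1 \<in> {1..n}" using k assms(3) by auto
      from acc[OF this] show ?thesis using k by (simp add: u_def of_nat_diff algebra_simps)
    qed
    have "exp (- \<alpha>h * (real k - 1)) = u / E"
      by (simp add: u_def E_def exp_diff[symmetric] algebra_simps)
    hence k2: "accum r n x k = C * u / E + p * real k + q"
      using acc[of k] k assms(3) by simp
    define w where "w = C * u / E"
    have Cu: "C * u = E * w" using Epos by (simp add: w_def)
    have ha: "a0 * (E + 1) = 2 * (E - 1)" using Epos by (simp add: a0_def)
    show "- zr r n x k * a0 + (2 * real k - 1) / 2 * b0 + c0 = dr r n x k"
    proof -
      have k2': "accum r n x k = w + p * real k + q" using k2 by (simp add: w_def)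
      have k1': "accum r n x (k-1) = E * w + p * (real k - 1) + q" using k1 Cu by simp
      show ?thesis unfolding zr_def dr_def k1' k2' b0_def c0_def by (rule key[OF ha])
    qed
  qed
  have L: "lsq r n x \<nu> = vector [a0, b0, c0]" by (rule lsq_exact[OF inv ex])
  have ratio: "(2 + a0) / (2 - a0) = E" using Epos
    by (simp add: a0_def field_simps)
  have a0nz: "a0 \<noteq> 0" using E1 Epos by (simp add: a0_def)
  have fa: "fag_alpha a0 = \<alpha>h" by (simp add: fag_alpha_def ratio E_def)
  have fb: "fag_beta a0 b0 = \<beta>h" using a0nz assms(4)
    by (simp add: fag_beta_def ratio E_def b0_def p_def)
  have fg: "fag_gamma a0 b0 c0 = \<gamma>h"
    unfolding fag_gamma_def Let_def fa fb using a0nz assms(4)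
    by (simp add: b0_def c0_def p_def q_def field_simps power2_eq_square)
  have pr: "pred_r (x 1) \<alpha>h \<beta>h \<gamma>h k = accum r n x k" if "k \<in> {1..n}" for k
    using that model accum1[of n r x] by (auto simp: pred_r_def)
  have P: "pred0 r n \<nu> x k = x k" if "k \<in> {1..n}" for k
  proof -
    have "pred0 r n \<nu> x k = rowmul n (pred_r (x 1) \<alpha>h \<beta>h \<gamma>h) (Dmat r) k"
      by (simp add: pred0_def L vector_3 fa fb fg)
    also have "\<dots> = rowmul n (accum r n x) (Dmat r) k"
      unfolding rowmul_def using pr by (intro sum.cong) auto
    also have "\<dots> = x k" using that inv_rowmul by auto
    finally show ?thesis .
  qed
  show ?thesis using fa fb fg P by (simp add: L vector_3)
qed

end
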